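(* Let $\mathrm U\ge0$, $h_b\in[0,1/2]$ and $k\in\mathbb T^2$. Then each connected component of $\rho(A_{1,1}(\mathrm U,k))\cap\mathbb R$ contains at most one eigenvalue of $A(\mathrm U,k)$.
   Context: Notation: $\mathbb T^2=[-\pi,\pi)^2$ with normalized Haar measure $\nu$; $L^2(\mathbb T^2)=L^2(\mathbb T^2,\nu)$, scalar product antilinear in the first argument. For $f\in\ell^1(\mathbb Z^2)$, $\hat f(k)=\sum_{x}e^{ik\cdot x}f(x)$, $k\in\mathbb R^2$. $\hat{\mathfrak e}_x(p)=e^{ip\cdot x}$; $P_x$ the orthogonal projection onto $\mathbb C\hat{\mathfrak e}_x$; $M_g$ multiplication by $g$; $\cos(q):=\cos q_1+\cos q_2$; $\rho(\cdot)$ denotes the resolvent set. Data: $\epsilon,h_b,\mathrm U\ge0$; $\mathrm u:\mathbb Z^2\to[0,\infty)$, $\upsilon,\mathfrak p_1,\mathfrak p_2:\mathbb Z^2\to\mathbb R$, all invariant under $90^\circ$-rotations, $\mathrm u,\upsilon$ absolutely summable, $\sum_z e^{\alpha_0|z|}|\mathfrak p_j(z)|<\infty$ for some $\alpha_0>0$, $\mathfrak p_2(z)=0$ for $z\notin(2\mathbb Z)^2$, $\mathfrak p_1+\mathfrak p_2\neq0$, and for every $k$ some $x$ with $\mathfrak p_2(x)\neq-e^{ik\cdot x/2}\mathfrak p_1(x)$. For $k,p\in\mathbb T^2$: $\mathfrak b(k)=h_b\epsilon(2-\cos k)$, $\mathfrak f(k)(p)=\epsilon(4-\cos(p+k)-\cos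 p)$, $\mathfrak d(k)(p)=\hat{\mathfrak p}_1(k+p)+\hat{\mathfrak p}_2(k/2+p)$. $A_{1,1}(\mathrm U,k)=M_{\mathfrak f(k)}+\sum_x\mathrm u(x)P_x+\mathrm UP_0$; on $\mathcal H=L^2(\mathbb T^2)\oplus\mathbb C$, $A(\mathrm U,k)(\varphi,z)=\big(A_{1,1}(\mathrm U,k)\varphi+\hat\upsilon(k)z\,\mathfrak d(k),\ \hat\upsilon(k)\langle\mathfrak d(k),\varphi\rangle+\mathfrak b(k)z\big)$. *)

theory Defs
  imports "HOL-Analysis.Analysis"
begin

definition TT :: "(real \<times> real) set" where
  "TT = {-pi..<pi} \<times> {-pi..<pi}"

definition nu :: "(real \<times> real) measure" where
  "nu = uniform_measure lborel TT"

text \<open>Square integrable functions (elements of L^2 are identified up to nu-a.e. equality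
  wherever they are compared below).\<close>
definition L2 :: "(real \<times> real \<Rightarrow> complex) set" where
  "L2 = {f. f \<in> borel_measurable nu \<and> integrable nu (\<lambda>p. (cmod (f p))\<^sup>2)}"

definition ip :: "(real \<times> real \<Rightarrow> complex) \<Rightarrow> (real \<times> real \<Rightarrow> complex) \<Rightarrow> complex" where
  "ip f g = (LINT p|nu. cnj (f p) * g p)"

definition L2norm :: "(real \<times> real \<Rightarrow> complex) \<Rightarrow> real" where
  "L2norm f = sqrt (LINT p|nu. (cmod (f p))\<^sup>2)"

definition dotZ :: "real \<times> real \<Rightarrow> int \<times> int \<Rightarrow> real" where
  "dotZ k x = fst k * real_of_int (fst x) + snd k * real_of_int (snd x)"

definition ehat :: "int \<times> int \<Rightarrow> real \<times> real \<Rightarrow> complex" where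
  "ehat x p = cis (dotZ p x)"

definition fhat :: "(int \<times> int \<Rightarrow> real) \<Rightarrow> real \<times> real \<Rightarrow> complex" where
  "fhat f k = infsum (\<lambda>x. cis (dotZ k x) * complex_of_real (f x)) UNIV"

definition cos2 :: "real \<times> real \<Rightarrow> real" where
  "cos2 q = cos (fst q) + cos (snd q)"

definition bfun :: "real \<Rightarrow> real \<Rightarrow> real \<times> real \<Rightarrow> real" where
  "bfun eps hb k = hb * eps * (2 - cos2 k)"

definition ffun :: "real \<Rightarrow> real \<times> real \<Rightarrow> real \<times> real \<Rightarrow> real" where
  "ffun eps k p = eps * (4 - cos2 (p + k) - cos2 p)"

definition dfun :: "(int \<times> int \<Rightarrow> real) \<Rightarrow> (int \<times> int \<Rightarrow> real) \<Rightarrow> real \<times> real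
    \<Rightarrow> real \<times> real \<Rightarrow> complex" where
  "dfun p1 p2 k p = fhat p1 (k + p) + fhat p2 ((1/2) *\<^sub>R k + p)"

definition rot_inv :: "(int \<times> int \<Rightarrow> real) \<Rightarrow> bool" where
  "rot_inv f \<longleftrightarrow> (\<forall>a b. f (- b, a) = f (a, b))"

definition A11 :: "real \<Rightarrow> real \<Rightarrow> (int \<times> int \<Rightarrow> real) \<Rightarrow> real \<times> real
    \<Rightarrow> (real \<times> real \<Rightarrow> complex) \<Rightarrow> (real \<times> real \<Rightarrow> complex)" where
  "A11 eps U u k \<phi> = (\<lambda>p. complex_of_real (ffun eps k p) * \<phi> p
      + infsum (\<lambda>x. complex_of_real (u x) * ip (ehat x) \<phi> * ehat x p) UNIV
      + complex_of_real U * ip (ehat (0,0)) \<phi> * ehat (0,0) p)"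

definition Aop :: "real \<Rightarrow> real \<Rightarrow> real \<Rightarrow> (int \<times> int \<Rightarrow> real) \<Rightarrow> (int \<times> int \<Rightarrow> real)
    \<Rightarrow> (int \<times> int \<Rightarrow> real) \<Rightarrow> (int \<times> int \<Rightarrow> real) \<Rightarrow> real \<times> real
    \<Rightarrow> (real \<times> real \<Rightarrow> complex) \<times> complex \<Rightarrow> (real \<times> real \<Rightarrow> complex) \<times> complex" where
  "Aop eps hb U u ups p1 p2 k w =
     ((\<lambda>p. A11 eps U u k (fst w) p + fhat ups k * snd w * dfun p1 p2 k p),
      fhat ups k * ip (dfun p1 p2 k) (fst w) + complex_of_real (bfun eps hb k) * snd w)"

definition in_resolvent :: "((real \<times> real \<Rightarrow> complex) \<Rightarrow> (real \<times> real \<Rightarrow> complex))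
    \<Rightarrow> complex \<Rightarrow> bool" where
  "in_resolvent T lam \<longleftrightarrow>
     (\<forall>g\<in>L2. \<exists>\<phi>\<in>L2. AE p in nu. T \<phi> p - lam * \<phi> p = g p) \<and>
     (\<exists>C. \<forall>\<phi>\<in>L2. L2norm \<phi> \<le> C * L2norm (\<lambda>p. T \<phi> p - lam * \<phi> p))"

definition is_eigenvalue_H :: "((real \<times> real \<Rightarrow> complex) \<times> complex \<Rightarrow> (real \<times> real \<Rightarrow> complex) \<times> complex)
    \<Rightarrow> complex \<Rightarrow> bool" where
  "is_eigenvalue_H A lam \<longleftrightarrow>
     (\<exists>\<phi> z. \<phi> \<in> L2 \<and> \<not> ((AE p in nu. \<phi> p = 0) \<and> z = 0) \<and>
        (AE p in nu. fst (A (\<phi>, z)) p = lam * \<phi> p) \<and> snd (A (\<phi>, z)) = lam * z)"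

end

theory Submission
  imports Defs
begin

lemma TT_sets: "TT \<in> sets lborel"
  unfolding TT_def by (simp add: borel_Times)

lemma TT_fin: "emeasure lborel TT \<noteq> \<infinity>"
proof -
  have "bounded TT" unfolding TT_def
    by (intro bounded_Times) (auto intro: bounded_subset[OF compact_imp_bounded[OF compact_Icc]])
  then show ?thesis using emeasure_bounded_finite[of TT] by simp
qed

lemma TT_nz: "emeasure lborel TT \<noteq> 0"
proof
  assume h: "emeasure lborel TT = 0"
  have "box (-pi,-pi) (pi,pi) \<subseteq> TT" unfolding TT_def
    by (auto simp: box_def Basis_prod_def inner_prod_def)
  then have "emeasure lborel (box (-pi,-pi) (pi::real,pi::real)) \<le> emeasure lborel TT"
    by (intro emeasure_mono TT_sets)
  moreover have "emeasure lborel (box (-pi,-pi) (pi::real,pi::real)) > 0"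
    by (subst emeasure_lborel_box) (auto simp: Basis_prod_def inner_prod_def box_def)
  ultimately show False using h by simp
qed

lemma space_nu[simp]: "space nu = UNIV" by (simp add: nu_def)
lemma sets_nu[simp]: "sets nu = sets borel" by (simp add: nu_def)
lemma meas_nu_iff[simp]: "f \<in> borel_measurable nu \<longleftrightarrow> f \<in> borel_measurable borel"
  by (simp add: measurable_def)

lemma nu_fin: "finite_measure nu"
proof
  have "emeasure nu (space nu) = emeasure lborel (TT \<inter> UNIV) / emeasure lborel TT"
    unfolding nu_def by (subst emeasure_uniform_measure) (auto simp: TT_sets[simplified])
  also have "\<dots> = 1" using TT_fin TT_nz by (simp add: divide_eq_1_ennreal)
  finally show "emeasure nu (space nu) \<noteq> \<infinity>" by simp
qed

interpretation nu: finite_measure nu by (rule nu_fin)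


lemma meas_cnj[measurable (raw)]: "f \<in> borel_measurable M \<Longrightarrow> (\<lambda>x. cnj (f x)) \<in> borel_measurable M"
  by (rule borel_measurable_continuous_on[where f=cnj]) (auto intro: continuous_intros)

lemma L2_iff: "f \<in> L2 \<longleftrightarrow> f \<in> borel_measurable borel \<and> integrable nu (\<lambda>p. (cmod (f p))\<^sup>2)"
  by (simp add: L2_def)

lemma L2_meas[measurable_dest]: "f \<in> L2 \<Longrightarrow> f \<in> borel_measurable borel" by (simp add: L2_iff)

lemma L2_sqint: "f \<in> L2 \<Longrightarrow> integrable nu (\<lambda>p. (cmod (f p))\<^sup>2)" by (simp add: L2_iff)

lemma sq_bound1: "cmod z \<le> 1 + (cmod z)\<^sup>2"
proof -
  have "0 \<le> (cmod z - 1/2)\<^sup>2" by simp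
  then show ?thesis by (simp add: power2_diff power2_eq_square algebra_simps)
qed

lemma L2_int: "f \<in> L2 \<Longrightarrow> integrable nu f"
  apply (rule Bochner_Integration.integrable_bound[of nu "\<lambda>p. 1 + (cmod (f p))\<^sup>2"])
  using sq_bound1 by (auto simp: L2_iff)

lemma prod_bound: "cmod a * cmod b \<le> (cmod a)\<^sup>2 + (cmod b)\<^sup>2"
proof -
  have "0 \<le> (cmod a - cmod b)\<^sup>2" by simp
  then have "2 * (cmod a * cmod b) \<le> (cmod a)\<^sup>2 + (cmod b)\<^sup>2" by (simp add: power2_diff)
  moreover have "0 \<le> cmod a * cmod b" by simp
  ultimately show ?thesis by linarith
qed

lemma L2_ip_int: "f \<in> L2 \<Longrightarrow> g \<in> L2 \<Longrightarrow> integrable nu (\<lambda>p. cnj (f p) * g p)"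
proof (rule Bochner_Integration.integrable_bound[of nu "\<lambda>p. (cmod (f p))\<^sup>2 + (cmod (g p))\<^sup>2"])
  assume f: "f \<in> L2" and g: "g \<in> L2"
  then show "integrable nu (\<lambda>p. (cmod (f p))\<^sup>2 + (cmod (g p))\<^sup>2)" by (auto simp: L2_iff)
  have [measurable]: "f \<in> borel_measurable borel" "g \<in> borel_measurable borel" using f g by (auto simp: L2_iff)
  show "(\<lambda>p. cnj (f p) * g p) \<in> borel_measurable nu" by simp
  show "AE p in nu. norm (cnj (f p) * g p) \<le> norm ((cmod (f p))\<^sup>2 + (cmod (g p))\<^sup>2)"
    using prod_bound by (auto simp: norm_mult)
qed

lemma L2_bdd: "f \<in> borel_measurable borel \<Longrightarrow> (\<And>p. cmod (f p) \<le> M) \<Longrightarrow> f \<in> L2"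
  unfolding L2_iff
  apply (rule conjI, simp)
  apply (rule Bochner_Integration.integrable_bound[of nu "\<lambda>p. M\<^sup>2"])
    apply simp
   apply simp
  apply (auto intro!: power_mono)
  done

lemma L2_mult: "f \<in> L2 \<Longrightarrow> g \<in> borel_measurable borel \<Longrightarrow> (\<And>p. cmod (g p) \<le> M) \<Longrightarrow> (\<lambda>p. g p * f p) \<in> L2"
proof -
  assume f: "f \<in> L2" and g[measurable]: "g \<in> borel_measurable borel" and M: "\<And>p. cmod (g p) \<le> M"
  have [measurable]: "f \<in> borel_measurable borel" using f by (simp add: L2_iff)
  show ?thesis unfolding L2_iff
  proof
    show "(\<lambda>p. g p * f p) \<in> borel_measurable borel" by simp
    show "integrable nu (\<lambda>p. (cmod (g p * f p))\<^sup>2)"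
      apply (rule Bochner_Integration.integrable_bound[of nu "\<lambda>p. M\<^sup>2 * (cmod (f p))\<^sup>2"])
      using f M by (auto simp: L2_iff norm_mult power_mult_distrib intro!: mult_right_mono power_mono)
  qed
qed

lemma L2_cmult: "f \<in> L2 \<Longrightarrow> (\<lambda>p. c * f p) \<in> L2"
  using L2_mult[of f "\<lambda>_. c" "cmod c"] by simp

lemma sq_tri: "(cmod (a + b))\<^sup>2 \<le> 2 * (cmod a)\<^sup>2 + 2 * (cmod b)\<^sup>2"
proof -
  have "cmod (a + b) \<le> cmod a + cmod b" by (rule norm_triangle_ineq)
  then have "(cmod (a + b))\<^sup>2 \<le> (cmod a + cmod b)\<^sup>2" by (intro power_mono) auto
  also have "\<dots> = (cmod a)\<^sup>2 + (cmod b)\<^sup>2 + 2 * (cmod a * cmod b)" by (simp add: power2_sum)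
  also have "\<dots> \<le> 2 * (cmod a)\<^sup>2 + 2 * (cmod b)\<^sup>2"
  proof -
    have "0 \<le> (cmod a - cmod b)\<^sup>2" by simp
    then show ?thesis by (simp add: power2_diff)
  qed
  finally show ?thesis .
qed

lemma L2_add: "f \<in> L2 \<Longrightarrow> g \<in> L2 \<Longrightarrow> (\<lambda>p. f p + g p) \<in> L2"
proof -
  assume f: "f \<in> L2" and g: "g \<in> L2"
  have [measurable]: "f \<in> borel_measurable borel" "g \<in> borel_measurable borel" using f g by (auto simp: L2_iff)
  show ?thesis unfolding L2_iff
  proof
    show "(\<lambda>p. f p + g p) \<in> borel_measurable borel" by simp
    show "integrable nu (\<lambda>p. (cmod (f p + g p))\<^sup>2)"
      apply (rule Bochner_Integration.integrable_bound[of nu "\<lambda>p. 2 * (cmod (f p))\<^sup>2 + 2 * (cmod (g p))\<^sup>2"])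
      using f g sq_tri by (auto simp: L2_iff)
  qed
qed

lemma L2_diff: "f \<in> L2 \<Longrightarrow> g \<in> L2 \<Longrightarrow> (\<lambda>p. f p - g p) \<in> L2"
  using L2_add[of f "\<lambda>p. (-1) * g p"] L2_cmult[of g "-1"] by simp

lemma ip_diff_right: "f \<in> L2 \<Longrightarrow> g \<in> L2 \<Longrightarrow> h \<in> L2 \<Longrightarrow> ip f (\<lambda>p. g p - h p) = ip f g - ip f h"
  unfolding ip_def using L2_ip_int[of f g] L2_ip_int[of f h]
  by (simp add: right_diff_distrib)

lemma ip_add_right: "f \<in> L2 \<Longrightarrow> g \<in> L2 \<Longrightarrow> h \<in> L2 \<Longrightarrow> ip f (\<lambda>p. g p + h p) = ip f g + ip f h"
  unfolding ip_def using L2_ip_int[of f g] L2_ip_int[of f h]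
  by (simp add: distrib_left)

lemma ip_cmult_right: "ip f (\<lambda>p. c * g p) = c * ip f g"
  unfolding ip_def by (simp add: mult.left_commute)

lemma ip_cmult_left: "ip (\<lambda>p. c * f p) g = cnj c * ip f g"
  unfolding ip_def by (simp add: mult.assoc)

lemma ip_cnj: "ip g f = cnj (ip f g)"
proof -
  have "cnj (CLINT p|nu. cnj (f p) * g p) = (CLINT p|nu. cnj (cnj (f p) * g p))" by (rule Bochner_Integration.integral_cnj[symmetric])
  then show ?thesis unfolding ip_def by (simp add: mult.commute)
qed

lemma L2norm_sq: "(L2norm f)\<^sup>2 = (LINT p|nu. (cmod (f p))\<^sup>2)"
  unfolding L2norm_def by (simp add: integral_nonneg_AE)

lemma cnj_self: "cnj z * z = complex_of_real ((cmod z)\<^sup>2)"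
  by (metis complex_norm_square mult.commute of_real_power)

lemma ip_self: "ip f f = complex_of_real ((L2norm f)\<^sup>2)"
  unfolding ip_def L2norm_sq cnj_self by (rule integral_complex_of_real)

lemma L2norm_nonneg: "L2norm f \<ge> 0" unfolding L2norm_def by simp

lemma ip_cong_AE: "f \<in> borel_measurable borel \<Longrightarrow> g \<in> borel_measurable borel \<Longrightarrow> g' \<in> borel_measurable borel
   \<Longrightarrow> AE p in nu. g p = g' p \<Longrightarrow> ip f g = ip f g'"
  unfolding ip_def by (rule integral_cong_AE) auto

lemma L2norm_cong_AE: "g \<in> borel_measurable borel \<Longrightarrow> g' \<in> borel_measurable borel
   \<Longrightarrow> AE p in nu. g p = g' p \<Longrightarrow> L2norm g = L2norm g'"
  unfolding L2norm_def by (subst integral_cong_AE[where g="\<lambda>p. (cmod (g' p))\<^sup>2"]) auto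

lemma L2norm_cmult: "L2norm (\<lambda>p. c * f p) = cmod c * L2norm f"
  unfolding L2norm_def by (simp add: norm_mult power_mult_distrib real_sqrt_mult)

lemma L2norm_add_sq: "f \<in> L2 \<Longrightarrow> g \<in> L2 \<Longrightarrow> (L2norm (\<lambda>p. f p + g p))\<^sup>2 \<le> 2 * (L2norm f)\<^sup>2 + 2 * (L2norm g)\<^sup>2"
proof -
  assume f: "f \<in> L2" and g: "g \<in> L2"
  have "(LINT p|nu. (cmod (f p + g p))\<^sup>2) \<le> (LINT p|nu. 2 * (cmod (f p))\<^sup>2 + 2 * (cmod (g p))\<^sup>2)"
    using f g L2_add[OF f g] sq_tri by (intro integral_mono) (auto simp: L2_iff)
  also have "\<dots> = 2 * (LINT p|nu. (cmod (f p))\<^sup>2) + 2 * (LINT p|nu. (cmod (g p))\<^sup>2)"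
    using f g by (simp add: L2_iff)
  finally show ?thesis unfolding L2norm_sq .
qed

lemma L2norm_zero: "f \<in> L2 \<Longrightarrow> L2norm f = 0 \<Longrightarrow> AE p in nu. f p = 0"
proof -
  assume f: "f \<in> L2" "L2norm f = 0"
  then have "(LINT p|nu. (cmod (f p))\<^sup>2) = 0" using L2norm_sq[of f] by simp
  then have "AE p in nu. (cmod (f p))\<^sup>2 = 0"
    using integral_nonneg_eq_0_iff_AE[of nu "\<lambda>p. (cmod (f p))\<^sup>2"] f by (auto simp: L2_iff)
  then show ?thesis by eventually_elim simp
qed

lemma ip_bound: "f \<in> L2 \<Longrightarrow> g \<in> L2 \<Longrightarrow> t > 0 \<Longrightarrow> cmod (ip f g) \<le> (t * (L2norm f)\<^sup>2 + (L2norm g)\<^sup>2 / t) / 2"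
proof -
  assume f: "f \<in> L2" and g: "g \<in> L2" and t: "t > 0"
  have pw: "cmod (cnj (f p) * g p) \<le> (t * (cmod (f p))\<^sup>2 + (cmod (g p))\<^sup>2 / t) / 2" for p
  proof -
    have "0 \<le> (sqrt t * cmod (f p) - cmod (g p) / sqrt t)\<^sup>2" by simp
    also have "\<dots> = t * (cmod (f p))\<^sup>2 + (cmod (g p))\<^sup>2 / t - 2 * (cmod (f p) * cmod (g p))"
      using t by (simp add: power2_diff power_mult_distrib power_divide)
    finally show ?thesis by (simp add: norm_mult)
  qed
  have "cmod (ip f g) \<le> (LINT p|nu. cmod (cnj (f p) * g p))"
    unfolding ip_def by (rule integral_norm_bound)
  also have "\<dots> \<le> (LINT p|nu. (t * (cmod (f p))\<^sup>2 + (cmod (g p))\<^sup>2 / t) / 2)"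
    using f g pw by (intro integral_mono integrable_norm L2_ip_int) (auto simp: L2_iff)
  also have "\<dots> = (t * (L2norm f)\<^sup>2 + (L2norm g)\<^sup>2 / t) / 2"
    using f g unfolding L2norm_sq by (simp add: L2_iff)
  finally show ?thesis .
qed


definition enumZ :: "nat \<Rightarrow> int \<times> int" where
  "enumZ n = (int_decode (fst (prod_decode n)), int_decode (snd (prod_decode n)))"

definition encZ :: "int \<times> int \<Rightarrow> nat" where
  "encZ x = prod_encode (int_encode (fst x), int_encode (snd x))"

lemma bij_enumZ: "bij enumZ"
proof (rule bij_betw_byWitness[where f'=encZ])
  show "\<forall>a\<in>UNIV. encZ (enumZ a) = a"
    by (auto simp: enumZ_def encZ_def int_decode_inverse prod_decode_inverse)
  show "\<forall>a'\<in>UNIV. enumZ (encZ a') = a'"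
    by (auto simp: enumZ_def encZ_def int_encode_inverse prod_encode_inverse)
qed auto

lemma infsum_suminf:
  fixes F :: "int \<times> int \<Rightarrow> complex"
  assumes "F summable_on UNIV"
  shows "infsum F UNIV = (\<Sum>n. F (enumZ n))" and "summable (\<lambda>n. norm (F (enumZ n)))"
proof -
  have s: "(\<lambda>n. F (enumZ n)) summable_on UNIV"
    using summable_on_reindex_bij_betw[OF bij_enumZ, of F] assms by simp
  have "(\<lambda>n. F (enumZ n)) sums infsum (\<lambda>n. F (enumZ n)) UNIV"
    by (rule has_sum_imp_sums[OF has_sum_infsum[OF s]])
  moreover have "infsum (\<lambda>n. F (enumZ n)) UNIV = infsum F UNIV"
    by (rule infsum_reindex_bij_betw[OF bij_enumZ])
  ultimately show "infsum F UNIV = (\<Sum>n. F (enumZ n))" by (simp add: sums_iff)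
  have "(\<lambda>x. norm (F x)) summable_on UNIV"
    using assms summable_on_iff_abs_summable_on_complex by blast
  then have "(\<lambda>n. norm (F (enumZ n))) summable_on UNIV"
    using summable_on_reindex_bij_betw[OF bij_enumZ, of "\<lambda>x. norm (F x)"] by simp
  then show "summable (\<lambda>n. norm (F (enumZ n)))" by (rule summable_on_imp_summable)
qed

lemma meas_infsum:
  fixes G :: "int \<times> int \<Rightarrow> 'a \<Rightarrow> complex"
  assumes "\<And>x. G x \<in> borel_measurable M" and "\<And>p. (\<lambda>x. G x p) summable_on UNIV"
  shows "(\<lambda>p. infsum (\<lambda>x. G x p) UNIV) \<in> borel_measurable M"
proof -
  have "(\<lambda>p. \<Sum>n. G (enumZ n) p) \<in> borel_measurable M"
    using assms(1) by (intro borel_measurable_suminf) auto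
  moreover have "(\<lambda>p. infsum (\<lambda>x. G x p) UNIV) = (\<lambda>p. \<Sum>n. G (enumZ n) p)"
    using infsum_suminf(1)[OF assms(2)] by auto
  ultimately show ?thesis by simp
qed

lemma summable_dom_abs:
  fixes F :: "int \<times> int \<Rightarrow> complex" and w :: "int \<times> int \<Rightarrow> real"
  assumes "w summable_on UNIV" "\<And>x. w x \<ge> 0" "\<And>x. cmod (F x) \<le> w x * C"
  shows "(\<lambda>x. cmod (F x)) summable_on UNIV"
proof -
  have "(\<lambda>x. w x * \<bar>C\<bar>) summable_on UNIV" using assms(1) by (rule summable_on_cmult_left)
  then have "(\<lambda>x. norm (w x * C)) summable_on UNIV"
    using assms(2) by (simp add: abs_mult)
  then show "(\<lambda>x. cmod (F x)) summable_on UNIV"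
    by (rule Infinite_Sum.abs_summable_on_comparison_test) (use assms(3) in \<open>force intro: order_trans[OF _ abs_ge_self]\<close>)
qed

lemma summable_dom:
  fixes F :: "int \<times> int \<Rightarrow> complex" and w :: "int \<times> int \<Rightarrow> real"
  assumes "w summable_on UNIV" "\<And>x. w x \<ge> 0" "\<And>x. cmod (F x) \<le> w x * C"
  shows "F summable_on UNIV"
  using summable_dom_abs[OF assms] summable_on_iff_abs_summable_on_complex by blast

lemma infsum_dom_bound:
  fixes F :: "int \<times> int \<Rightarrow> complex" and w :: "int \<times> int \<Rightarrow> real"
  assumes "w summable_on UNIV" "\<And>x. w x \<ge> 0" "\<And>x. cmod (F x) \<le> w x * C"
  shows "cmod (infsum F UNIV) \<le> infsum w UNIV * C"
proof -
  have ws: "(\<lambda>x. w x * C) summable_on UNIV" using assms(1) by (rule summable_on_cmult_left)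
  have "cmod (infsum F UNIV) \<le> infsum (\<lambda>x. cmod (F x)) UNIV"
    by (rule norm_infsum_bound) (rule summable_dom_abs[OF assms])
  also have "\<dots> \<le> infsum (\<lambda>x. w x * C) UNIV"
    by (rule infsum_mono[OF summable_dom_abs[OF assms] ws]) (use assms(3) in auto)
  also have "\<dots> = infsum w UNIV * C" by (rule infsum_cmult_left') 
  finally show ?thesis .
qed

lemma integral_infsum:
  fixes G :: "int \<times> int \<Rightarrow> real \<times> real \<Rightarrow> complex" and w :: "int \<times> int \<Rightarrow> real"
  assumes G: "\<And>x. integrable nu (G x)"
    and w: "w summable_on UNIV" "\<And>x. w x \<ge> 0"
    and h: "integrable nu h" "\<And>p. h p \<ge> 0"
    and bnd: "\<And>x p. cmod (G x p) \<le> w x * h p"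
  shows "integrable nu (\<lambda>p. infsum (\<lambda>x. G x p) UNIV)"
    and "(LINT p|nu. infsum (\<lambda>x. G x p) UNIV) = infsum (\<lambda>x. LINT p|nu. G x p) UNIV"
proof -
  have ws: "summable (\<lambda>n. w (enumZ n))"
  proof -
    have "(\<lambda>n. w (enumZ n)) summable_on UNIV"
      using summable_on_reindex_bij_betw[OF bij_enumZ, of w] w by simp
    then show ?thesis by (rule summable_on_imp_summable)
  qed
  have sp: "(\<lambda>x. G x p) summable_on UNIV" for p
    by (rule summable_dom[OF w, of _ "h p"]) (use bnd in auto)
  have iG: "cmod (LINT p|nu. G x p) \<le> w x * (LINT p|nu. h p)" for x
  proof -
    have "cmod (LINT p|nu. G x p) \<le> (LINT p|nu. cmod (G x p))" by (rule integral_norm_bound)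
    also have "\<dots> \<le> (LINT p|nu. w x * h p)" using G h bnd by (intro integral_mono) auto
    finally show ?thesis by simp
  qed
  have si: "(\<lambda>x. LINT p|nu. G x p) summable_on UNIV"
    by (rule summable_dom[OF w iG])
  have A1: "\<And>i. integrable nu (G (enumZ i))" using G by auto
  have A2: "AE p in nu. summable (\<lambda>i. norm (G (enumZ i) p))"
    using infsum_suminf(2)[OF sp] by auto
  have A3: "summable (\<lambda>i. (LINT p|nu. norm (G (enumZ i) p)))"
  proof (rule summable_comparison_test[OF _ summable_mult2[OF ws, of "LINT p|nu. h p"]])
    have "\<bar>LINT p|nu. norm (G (enumZ i) p)\<bar> \<le> w (enumZ i) * (LINT p|nu. h p)" for i
    proof -
      have "(LINT p|nu. norm (G (enumZ i) p)) \<le> (LINT p|nu. w (enumZ i) * h p)"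
        using G h bnd by (intro integral_mono) auto
      then show ?thesis by simp
    qed
    then show "\<exists>N. \<forall>n\<ge>N. norm (LINT p|nu. norm (G (enumZ n) p)) \<le> w (enumZ n) * (LINT p|nu. h p)"
      by auto
  qed
  have e1: "(\<lambda>p. infsum (\<lambda>x. G x p) UNIV) = (\<lambda>p. \<Sum>n. G (enumZ n) p)"
    using infsum_suminf(1)[OF sp] by auto
  show "integrable nu (\<lambda>p. infsum (\<lambda>x. G x p) UNIV)"
    unfolding e1 by (rule integrable_suminf[OF A1 A2 A3])
  show "(LINT p|nu. infsum (\<lambda>x. G x p) UNIV) = infsum (\<lambda>x. LINT p|nu. G x p) UNIV"
    unfolding e1 infsum_suminf(1)[OF si] by (rule integral_suminf[OF A1 A2 A3])
qed


lemma meas_cis[measurable (raw)]: "f \<in> borel_measurable M \<Longrightarrow> (\<lambda>x. cis (f x)) \<in> borel_measurable M"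
  by (rule borel_measurable_continuous_on[where f=cis]) (auto intro: continuous_intros)

lemma cmod_cis_real: "cmod (cis t * complex_of_real r) = \<bar>r\<bar>"
  by (simp add: norm_mult)

lemma fhat_summable: "(\<lambda>x. \<bar>f x\<bar>) summable_on UNIV \<Longrightarrow>
    (\<lambda>x. cis (dotZ q x) * complex_of_real (f x)) summable_on UNIV"
  by (rule summable_dom[where w="\<lambda>x. \<bar>f x\<bar>" and C=1]) (auto simp: norm_mult)

lemma fhat_bound: "(\<lambda>x. \<bar>f x\<bar>) summable_on UNIV \<Longrightarrow> cmod (fhat f q) \<le> infsum (\<lambda>x. \<bar>f x\<bar>) UNIV"
  unfolding fhat_def
  using infsum_dom_bound[where w="\<lambda>x. \<bar>f x\<bar>" and C=1 and F="\<lambda>x. cis (dotZ q x) * complex_of_real (f x)"]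
  by (auto simp: norm_mult)

lemma fhat_meas: "(\<lambda>x. \<bar>f x\<bar>) summable_on UNIV \<Longrightarrow> (\<lambda>p. fhat f (c + p)) \<in> borel_measurable borel"
  unfolding fhat_def
  apply (rule meas_infsum[where G="\<lambda>x p. cis (dotZ (c + p) x) * complex_of_real (f x)"])
   subgoal by (rule borel_measurable_continuous_onI) (unfold dotZ_def, intro continuous_intros)
  by (erule fhat_summable)

lemma rot_neg: "rot_inv f \<Longrightarrow> f (- x) = f x"
proof -
  assume r: "rot_inv f"
  obtain a b where x: "x = (a, b)" by fastforce
  have "f (- a, - b) = f (- b, a)" using r unfolding rot_inv_def by (metis minus_minus)
  also have "\<dots> = f (a, b)" using r unfolding rot_inv_def by blast
  finally show ?thesis using x by simp
qed

lemma fhat_real: "rot_inv f \<Longrightarrow> cnj (fhat f q) = fhat f q"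
proof -
  assume r: "rot_inv f"
  have bij: "bij (uminus :: int \<times> int \<Rightarrow> int \<times> int)" by (rule bij_uminus)
  have "cnj (fhat f q) = infsum (\<lambda>x. cnj (cis (dotZ q x) * complex_of_real (f x))) UNIV"
    unfolding fhat_def by (rule infsum_cnj[symmetric])
  also have "\<dots> = infsum (\<lambda>x. cis (dotZ q (- x)) * complex_of_real (f (- x))) UNIV"
    by (rule infsum_cong) (simp add: cis_cnj rot_neg[OF r] dotZ_def)
  also have "\<dots> = fhat f q"
    unfolding fhat_def by (rule infsum_reindex_bij_betw[OF bij, where f="\<lambda>x. cis (dotZ q x) * complex_of_real (f x)"])
  finally show ?thesis .
qed

lemma exp_sum_abs: "\<exists>\<alpha>>0. (\<lambda>z. exp (\<alpha> * norm (real_of_int (fst z), real_of_int (snd z))) * \<bar>p1 z\<bar>) summable_on UNIV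
   \<Longrightarrow> (\<lambda>x. \<bar>p1 x\<bar>) summable_on (UNIV :: (int \<times> int) set)"
proof -
  assume "\<exists>\<alpha>>0. (\<lambda>z. exp (\<alpha> * norm (real_of_int (fst z), real_of_int (snd z))) * \<bar>p1 z\<bar>) summable_on UNIV"
  then obtain \<alpha> where a: "\<alpha> > 0" and s: "(\<lambda>z. exp (\<alpha> * norm (real_of_int (fst z), real_of_int (snd z))) * \<bar>p1 z\<bar>) summable_on UNIV"
    by blast
  have s': "(\<lambda>z. norm (exp (\<alpha> * norm (real_of_int (fst z), real_of_int (snd z))) * \<bar>p1 z\<bar>)) summable_on UNIV"
    using s by simp
  have "(\<lambda>z. norm \<bar>p1 z\<bar>) summable_on UNIV"
  proof (rule Infinite_Sum.abs_summable_on_comparison_test[OF s'])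
    fix z :: "int \<times> int"
    have "1 \<le> exp (\<alpha> * norm (real_of_int (fst z), real_of_int (snd z)))" using a by simp
    then show "norm \<bar>p1 z\<bar> \<le> norm (exp (\<alpha> * norm (real_of_int (fst z), real_of_int (snd z))) * \<bar>p1 z\<bar>)"
      by (simp add: mult_le_cancel_right1 abs_mult)
  qed
  then show ?thesis by simp
qed

lemma dfun_L2: "(\<lambda>x. \<bar>p1 x\<bar>) summable_on UNIV \<Longrightarrow> (\<lambda>x. \<bar>p2 x\<bar>) summable_on UNIV \<Longrightarrow> dfun p1 p2 k \<in> L2"
proof -
  assume s1: "(\<lambda>x. \<bar>p1 x\<bar>) summable_on UNIV" and s2: "(\<lambda>x. \<bar>p2 x\<bar>) summable_on UNIV"
  have [measurable]: "(\<lambda>p. fhat p1 (k + p)) \<in> borel_measurable borel" "(\<lambda>p. fhat p2 ((1/2) *\<^sub>R k + p)) \<in> borel_measurable borel"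
    using fhat_meas[OF s1] fhat_meas[OF s2] by auto
  show ?thesis unfolding dfun_def
  proof (rule L2_bdd)
    show "(\<lambda>p. fhat p1 (k + p) + fhat p2 ((1/2) *\<^sub>R k + p)) \<in> borel_measurable borel" by simp
    fix p
    show "cmod (fhat p1 (k + p) + fhat p2 ((1/2) *\<^sub>R k + p)) \<le> infsum (\<lambda>x. \<bar>p1 x\<bar>) UNIV + infsum (\<lambda>x. \<bar>p2 x\<bar>) UNIV"
      using fhat_bound[OF s1] fhat_bound[OF s2] norm_triangle_ineq by (smt (verit))
  qed
qed


definition Sop :: "(int \<times> int \<Rightarrow> real) \<Rightarrow> (real \<times> real \<Rightarrow> complex) \<Rightarrow> real \<times> real \<Rightarrow> complex" where
  "Sop u \<phi> p = infsum (\<lambda>x. complex_of_real (u x) * ip (ehat x) \<phi> * ehat x p) UNIV"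

definition Fop :: "real \<Rightarrow> real \<times> real \<Rightarrow> (real \<times> real \<Rightarrow> complex) \<Rightarrow> real \<times> real \<Rightarrow> complex" where
  "Fop eps k \<phi> p = complex_of_real (ffun eps k p) * \<phi> p"

definition Zop :: "real \<Rightarrow> (real \<times> real \<Rightarrow> complex) \<Rightarrow> real \<times> real \<Rightarrow> complex" where
  "Zop U \<phi> p = (complex_of_real U * ip (ehat (0,0)) \<phi>) * ehat (0,0) p"

lemma A11_eq: "A11 eps U u k \<phi> = (\<lambda>p. (Fop eps k \<phi> p + Sop u \<phi> p) + Zop U \<phi> p)"
  by (simp add: A11_def Sop_def Fop_def Zop_def fun_eq_iff)

lemma ehat_meas[measurable]: "ehat x \<in> borel_measurable borel"
  unfolding ehat_def by (rule borel_measurable_continuous_onI) (unfold dotZ_def, intro continuous_intros)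

lemma ehat_norm[simp]: "cmod (ehat x p) = 1" by (simp add: ehat_def)

lemma ehat_L2: "ehat x \<in> L2" by (rule L2_bdd[where M=1]) auto

definition N1 :: "(real \<times> real \<Rightarrow> complex) \<Rightarrow> real" where
  "N1 \<phi> = (LINT p|nu. cmod (\<phi> p))"

lemma N1_nonneg: "N1 \<phi> \<ge> 0" unfolding N1_def by simp

lemma coef_bound: "\<phi> \<in> L2 \<Longrightarrow> cmod (ip (ehat x) \<phi>) \<le> N1 \<phi>"
proof -
  have "cmod (ip (ehat x) \<phi>) \<le> (LINT p|nu. cmod (cnj (ehat x p) * \<phi> p))"
    unfolding ip_def by (rule integral_norm_bound)
  also have "\<dots> = N1 \<phi>" unfolding N1_def by (simp add: norm_mult)
  finally show ?thesis .
qed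

lemma Sop_summable: "(\<And>x. u x \<ge> 0) \<Longrightarrow> u summable_on UNIV \<Longrightarrow> \<phi> \<in> L2 \<Longrightarrow>
  (\<lambda>x. complex_of_real (u x) * ip (ehat x) \<phi> * ehat x p) summable_on UNIV"
  by (rule summable_dom[where w=u and C="N1 \<phi>"]) (auto simp: norm_mult intro!: mult_left_mono coef_bound)

lemma Sop_meas: "(\<And>x. u x \<ge> 0) \<Longrightarrow> u summable_on UNIV \<Longrightarrow> \<phi> \<in> L2 \<Longrightarrow> Sop u \<phi> \<in> borel_measurable borel"
  unfolding Sop_def by (rule meas_infsum) (auto intro: Sop_summable)

lemma Sop_bound: "(\<And>x. u x \<ge> 0) \<Longrightarrow> u summable_on UNIV \<Longrightarrow> \<phi> \<in> L2 \<Longrightarrow>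
   cmod (Sop u \<phi> p) \<le> infsum u UNIV * N1 \<phi>"
  unfolding Sop_def
  by (rule infsum_dom_bound[where w=u]) (auto simp: norm_mult intro!: mult_left_mono coef_bound)

lemma Sop_L2: "(\<And>x. u x \<ge> 0) \<Longrightarrow> u summable_on UNIV \<Longrightarrow> \<phi> \<in> L2 \<Longrightarrow> Sop u \<phi> \<in> L2"
  by (rule L2_bdd[OF Sop_meas Sop_bound])

lemma ffun_meas[measurable]: "(\<lambda>p. ffun eps k p) \<in> borel_measurable borel"
  unfolding ffun_def cos2_def by (rule borel_measurable_continuous_onI) (intro continuous_intros)

lemma ffun_bound: "\<bar>ffun eps k p\<bar> \<le> 8 * \<bar>eps\<bar>"
proof -
  have "\<bar>4 - cos2 (p + k) - cos2 p\<bar> \<le> 8"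
    unfolding cos2_def using abs_cos_le_one[of "fst (p+k)"] abs_cos_le_one[of "snd (p+k)"]
      abs_cos_le_one[of "fst p"] abs_cos_le_one[of "snd p"] by linarith
  then show ?thesis unfolding ffun_def abs_mult by (simp add: mult.commute mult_left_mono)
qed

lemma Fop_L2: "\<phi> \<in> L2 \<Longrightarrow> Fop eps k \<phi> \<in> L2"
  unfolding Fop_def by (rule L2_mult[where M="8 * \<bar>eps\<bar>"]) (auto intro: ffun_bound)

lemma Zop_L2: "\<phi> \<in> L2 \<Longrightarrow> Zop U \<phi> \<in> L2"
  unfolding Zop_def by (rule L2_cmult[OF ehat_L2])

lemma A11_L2: "(\<And>x. u x \<ge> 0) \<Longrightarrow> u summable_on UNIV \<Longrightarrow> \<phi> \<in> L2 \<Longrightarrow> A11 eps U u k \<phi> \<in> L2"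
  unfolding A11_eq by (intro L2_add Fop_L2 Sop_L2 Zop_L2)

lemma Sop_lin: "(\<And>x. u x \<ge> 0) \<Longrightarrow> u summable_on UNIV \<Longrightarrow> \<phi> \<in> L2 \<Longrightarrow> \<psi> \<in> L2 \<Longrightarrow>
   Sop u (\<lambda>p. \<phi> p - c * \<psi> p) p = Sop u \<phi> p - c * Sop u \<psi> p"
proof -
  assume u: "\<And>x. u x \<ge> 0" "u summable_on UNIV" and f: "\<phi> \<in> L2" and g: "\<psi> \<in> L2"
  have ipx: "ip (ehat x) (\<lambda>p. \<phi> p - c * \<psi> p) = ip (ehat x) \<phi> - c * ip (ehat x) \<psi>" for x
    using ip_diff_right[OF ehat_L2 f L2_cmult[OF g]] ip_cmult_right by simp
  have "Sop u (\<lambda>p. \<phi> p - c * \<psi> p) p = infsum (\<lambda>x. complex_of_real (u x) * ip (ehat x) \<phi> * ehat x p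
      + (- c) * (complex_of_real (u x) * ip (ehat x) \<psi> * ehat x p)) UNIV"
    unfolding Sop_def ipx by (rule infsum_cong) (simp add: algebra_simps)
  also have "\<dots> = Sop u \<phi> p + (- c) * Sop u \<psi> p"
  proof -
    have s1: "(\<lambda>x. complex_of_real (u x) * ip (ehat x) \<phi> * ehat x p) summable_on UNIV"
      by (rule Sop_summable[OF u f])
    have s2: "(\<lambda>x. (- c) * (complex_of_real (u x) * ip (ehat x) \<psi> * ehat x p)) summable_on UNIV"
      by (rule summable_on_cmult_right[OF Sop_summable[OF u g]])
    show ?thesis unfolding Sop_def by (simp only: infsum_add[OF s1 s2] infsum_cmult_right')
  qed
  finally show ?thesis by simp
qed

lemma A11_lin: "(\<And>x. u x \<ge> 0) \<Longrightarrow> u summable_on UNIV \<Longrightarrow> \<phi> \<in> L2 \<Longrightarrow> \<psi> \<in> L2 \<Longrightarrow>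
   A11 eps U u k (\<lambda>p. \<phi> p - c * \<psi> p) p = A11 eps U u k \<phi> p - c * A11 eps U u k \<psi> p"
proof -
  assume u: "\<And>x. u x \<ge> 0" "u summable_on UNIV" and f: "\<phi> \<in> L2" and g: "\<psi> \<in> L2"
  have ipx: "ip (ehat x) (\<lambda>p. \<phi> p - c * \<psi> p) = ip (ehat x) \<phi> - c * ip (ehat x) \<psi>" for x
    using ip_diff_right[OF ehat_L2 f L2_cmult[OF g]] ip_cmult_right by simp
  show ?thesis unfolding A11_eq Sop_lin[OF u f g] unfolding Fop_def Zop_def ipx
    by (simp add: algebra_simps)
qed

lemma ipS: "(\<And>x. u x \<ge> 0) \<Longrightarrow> u summable_on UNIV \<Longrightarrow> a \<in> L2 \<Longrightarrow> b \<in> L2 \<Longrightarrow>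
   ip a (Sop u b) = infsum (\<lambda>x. complex_of_real (u x) * ip (ehat x) b * ip a (ehat x)) UNIV"
proof -
  assume u: "\<And>x. u x \<ge> 0" "u summable_on UNIV" and a: "a \<in> L2" and b: "b \<in> L2"
  define G where "G x p = cnj (a p) * (complex_of_real (u x) * ip (ehat x) b * ehat x p)" for x p
  have "ip a (Sop u b) = (LINT p|nu. infsum (\<lambda>x. G x p) UNIV)"
    unfolding ip_def Sop_def G_def by (simp add: infsum_cmult_right')
  also have "\<dots> = infsum (\<lambda>x. LINT p|nu. G x p) UNIV"
  proof (rule integral_infsum(2)[where w=u and h="\<lambda>p. N1 b * cmod (a p)"])
    show "integrable nu (G x)" for x
    proof -
      have "integrable nu (\<lambda>p. (complex_of_real (u x) * ip (ehat x) b) * (cnj (a p) * ehat x p))"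
        by (intro integrable_mult_right L2_ip_int a ehat_L2)
      then show ?thesis unfolding G_def by (simp add: algebra_simps)
    qed
    show "integrable nu (\<lambda>p. N1 b * cmod (a p))" by (intro integrable_mult_right integrable_norm L2_int a)
    show "N1 b * cmod (a p) \<ge> 0" for p using N1_nonneg by simp
    show "cmod (G x p) \<le> u x * (N1 b * cmod (a p))" for x p
    proof -
      have "cmod (G x p) = cmod (a p) * (u x * cmod (ip (ehat x) b))"
        unfolding G_def using u by (simp add: norm_mult)
      also have "\<dots> \<le> cmod (a p) * (u x * N1 b)"
        using coef_bound[OF b] u by (intro mult_left_mono) auto
      finally show ?thesis by (simp add: algebra_simps)
    qed
  qed (use u in auto)
  also have "\<dots> = infsum (\<lambda>x. complex_of_real (u x) * ip (ehat x) b * ip a (ehat x)) UNIV"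
  proof (rule infsum_cong)
    fix x
    have "(LINT p|nu. G x p) = (LINT p|nu. (complex_of_real (u x) * ip (ehat x) b) * (cnj (a p) * ehat x p))"
      unfolding G_def by (rule Bochner_Integration.integral_cong) (auto simp: algebra_simps)
    also have "\<dots> = complex_of_real (u x) * ip (ehat x) b * ip a (ehat x)"
      unfolding ip_def by simp
    finally show "(LINT p|nu. G x p) = complex_of_real (u x) * ip (ehat x) b * ip a (ehat x)" .
  qed
  finally show ?thesis .
qed

lemma ip_cnj': "cnj (ip f g) = ip g f" by (simp add: ip_cnj[of g f])

lemma A11_sym: "(\<And>x. u x \<ge> 0) \<Longrightarrow> u summable_on UNIV \<Longrightarrow> a \<in> L2 \<Longrightarrow> b \<in> L2 \<Longrightarrow>
   ip a (A11 eps U u k b) = ip (A11 eps U u k a) b"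
proof -
  assume u: "\<And>x. u x \<ge> 0" "u summable_on UNIV" and a: "a \<in> L2" and b: "b \<in> L2"
  have dec: "ip c (A11 eps U u k d) = ip c (Fop eps k d) + ip c (Sop u d) + ip c (Zop U d)"
    if c: "c \<in> L2" and d: "d \<in> L2" for c d
    unfolding A11_eq
    by (simp add: ip_add_right L2_add Fop_L2 Sop_L2 Zop_L2 u c d)
  have F: "ip a (Fop eps k b) = cnj (ip b (Fop eps k a))"
    unfolding ip_cnj[of b] unfolding ip_def Fop_def by (simp add: algebra_simps)
  have S: "ip a (Sop u b) = cnj (ip b (Sop u a))"
    unfolding ipS[OF u a b] ipS[OF u b a] infsum_cnj[symmetric]
    by (rule infsum_cong) (simp only: complex_cnj_mult complex_cnj_complex_of_real ip_cnj' mult_ac)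
  have Z: "ip a (Zop U b) = cnj (ip b (Zop U a))"
    unfolding Zop_def ip_cmult_right by (simp only: complex_cnj_mult complex_cnj_complex_of_real ip_cnj' mult_ac)
  have "ip (A11 eps U u k a) b = cnj (ip b (A11 eps U u k a))" by (rule ip_cnj)
  also have "\<dots> = ip a (A11 eps U u k b)"
    unfolding dec[OF b a] dec[OF a b] F S Z by simp
  finally show ?thesis by simp
qed


locale absop =
  fixes T :: "(real \<times> real \<Rightarrow> complex) \<Rightarrow> (real \<times> real \<Rightarrow> complex)"
    and d :: "real \<times> real \<Rightarrow> complex" and v :: complex and b :: real
  assumes T_L2: "\<And>\<phi>. \<phi> \<in> L2 \<Longrightarrow> T \<phi> \<in> L2"
    and T_lin: "\<And>\<phi> \<psi> c p. \<phi> \<in> L2 \<Longrightarrow> \<psi> \<in> L2 \<Longrightarrow> T (\<lambda>p. \<phi> p - c * \<psi> p) p = T \<phi> p - c * T \<psi> p"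
    and T_sym: "\<And>\<phi> \<psi>. \<phi> \<in> L2 \<Longrightarrow> \<psi> \<in> L2 \<Longrightarrow> ip \<phi> (T \<psi>) = ip (T \<phi>) \<psi>"
    and d_L2: "d \<in> L2"
    and v_real: "cnj v = v"
begin

definition R :: "real set" where "R = {t. in_resolvent T (complex_of_real t)}"

definition psi :: "real \<Rightarrow> real \<times> real \<Rightarrow> complex" where
  "psi t = (SOME \<phi>. \<phi> \<in> L2 \<and> (AE p in nu. T \<phi> p - complex_of_real t * \<phi> p = - v * d p))"

definition Cst :: "real \<Rightarrow> real" where
  "Cst t = (SOME C. \<forall>\<phi>\<in>L2. L2norm \<phi> \<le> C * L2norm (\<lambda>p. T \<phi> p - complex_of_real t * \<phi> p))"

lemma psi_prop: "t \<in> R \<Longrightarrow> psi t \<in> L2 \<and> (AE p in nu. T (psi t) p - complex_of_real t * psi t p = - v * d p)"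
proof -
  assume "t \<in> R"
  then have A: "\<forall>g\<in>L2. \<exists>\<phi>\<in>L2. AE p in nu. T \<phi> p - complex_of_real t * \<phi> p = g p"
    unfolding R_def in_resolvent_def by simp
  have B: "(\<lambda>p. - v * d p) \<in> L2" using L2_cmult[OF d_L2, of "-v"] .
  from A[rule_format, OF B] obtain \<phi> where "\<phi> \<in> L2" "AE p in nu. T \<phi> p - complex_of_real t * \<phi> p = - v * d p"
    by blast
  then have "\<exists>\<phi>. \<phi> \<in> L2 \<and> (AE p in nu. T \<phi> p - complex_of_real t * \<phi> p = - v * d p)" by blast
  then show ?thesis unfolding psi_def by (rule someI_ex)
qed

lemma psi_L2: "t \<in> R \<Longrightarrow> psi t \<in> L2" using psi_prop by blast
lemma psi_eq: "t \<in> R \<Longrightarrow> AE p in nu. T (psi t) p - complex_of_real t * psi t p = - v * d p"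
  using psi_prop by blast

lemma Cst_prop: "t \<in> R \<Longrightarrow> \<phi> \<in> L2 \<Longrightarrow> L2norm \<phi> \<le> Cst t * L2norm (\<lambda>p. T \<phi> p - complex_of_real t * \<phi> p)"
proof -
  assume "t \<in> R" "\<phi> \<in> L2"
  then have "\<exists>C. \<forall>\<phi>\<in>L2. L2norm \<phi> \<le> C * L2norm (\<lambda>p. T \<phi> p - complex_of_real t * \<phi> p)"
    unfolding R_def in_resolvent_def by blast
  then have "\<forall>\<phi>\<in>L2. L2norm \<phi> \<le> Cst t * L2norm (\<lambda>p. T \<phi> p - complex_of_real t * \<phi> p)"
    unfolding Cst_def by (rule someI_ex)
  then show ?thesis using \<open>\<phi> \<in> L2\<close> by blast
qed

lemma res_L2: "\<phi> \<in> L2 \<Longrightarrow> (\<lambda>p. T \<phi> p - c * \<phi> p) \<in> L2"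
  by (intro L2_diff T_L2 L2_cmult)

lemma uniq: "t \<in> R \<Longrightarrow> \<phi> \<in> L2 \<Longrightarrow> (AE p in nu. T \<phi> p - complex_of_real t * \<phi> p = 0) \<Longrightarrow> AE p in nu. \<phi> p = 0"
proof -
  assume t: "t \<in> R" and f: "\<phi> \<in> L2" and ae: "AE p in nu. T \<phi> p - complex_of_real t * \<phi> p = 0"
  have "L2norm (\<lambda>p. T \<phi> p - complex_of_real t * \<phi> p) = L2norm (\<lambda>p. 0)"
    by (rule L2norm_cong_AE[OF L2_meas[OF res_L2[OF f]] _ ae]) simp
  also have "\<dots> = 0" by (simp add: L2norm_def)
  finally have "L2norm \<phi> \<le> 0" using Cst_prop[OF t f] by simp
  then have "L2norm \<phi> = 0" using L2norm_nonneg[of \<phi>] by linarith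
  then show ?thesis by (rule L2norm_zero[OF f])
qed

definition K :: "real \<Rightarrow> complex" where "K t = v * ip (psi t) d"

lemma eigen_K:
  assumes t: "t \<in> R"
    and ev: "is_eigenvalue_H (\<lambda>w. ((\<lambda>p. T (fst w) p + v * snd w * d p), v * ip d (fst w) + complex_of_real b * snd w)) (complex_of_real t)"
  shows "K t = complex_of_real (t - b)"
proof -
  have "\<exists>\<phi> z. \<phi> \<in> L2 \<and> \<not> ((AE p in nu. \<phi> p = 0) \<and> z = 0) \<and>
    (AE p in nu. T \<phi> p + v * z * d p = complex_of_real t * \<phi> p) \<and>
    v * ip d \<phi> + complex_of_real b * z = complex_of_real t * z"
    using ev unfolding is_eigenvalue_H_def by (simp only: fst_conv snd_conv)
  then obtain \<phi> z where f: "\<phi> \<in> L2" and nz: "\<not> ((AE p in nu. \<phi> p = 0) \<and> z = 0)"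
    and e1: "AE p in nu. T \<phi> p + v * z * d p = complex_of_real t * \<phi> p"
    and e2: "v * ip d \<phi> + complex_of_real b * z = complex_of_real t * z"
    by blast
  have z: "z \<noteq> 0"
  proof
    assume z0: "z = 0"
    have "AE p in nu. T \<phi> p - complex_of_real t * \<phi> p = 0" using e1 by eventually_elim (simp add: z0)
    then have "AE p in nu. \<phi> p = 0" by (rule uniq[OF t f])
    then show False using nz z0 by simp
  qed
  define w where "w p = \<phi> p - z * psi t p" for p
  have wL2: "w \<in> L2" unfolding w_def by (intro L2_diff f L2_cmult psi_L2 t)
  have "AE p in nu. T w p - complex_of_real t * w p = 0"
    using e1 psi_eq[OF t]
  proof eventually_elim
    case (elim p)
    have "T w p = T \<phi> p - z * T (psi t) p" unfolding w_def[abs_def] by (rule T_lin[OF f psi_L2[OF t]])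
    then have "T w p - complex_of_real t * w p = (T \<phi> p - complex_of_real t * \<phi> p) - z * (T (psi t) p - complex_of_real t * psi t p)"
      unfolding w_def by (simp add: algebra_simps)
    also have "\<dots> = 0"
    proof -
      have A: "T \<phi> p = complex_of_real t * \<phi> p - v * z * d p" using elim(1) by (simp add: eq_diff_eq)
      have B: "T (psi t) p = - v * d p + complex_of_real t * psi t p" using elim(2) by (simp add: diff_eq_eq)
      show ?thesis unfolding A B by (simp add: algebra_simps)
    qed
    finally show ?case .
  qed
  then have "AE p in nu. w p = 0" by (rule uniq[OF t wL2])
  then have ae: "AE p in nu. \<phi> p = z * psi t p" by eventually_elim (simp add: w_def)
  have "ip d \<phi> = ip d (\<lambda>p. z * psi t p)"
    by (rule ip_cong_AE[OF L2_meas[OF d_L2] L2_meas[OF f] L2_meas[OF L2_cmult[OF psi_L2[OF t]]] ae])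
  also have "\<dots> = z * ip d (psi t)" by (rule ip_cmult_right)
  finally have "z * (v * ip d (psi t) + complex_of_real b - complex_of_real t) = 0"
    using e2 by (simp add: algebra_simps)
  then have h: "v * ip d (psi t) = complex_of_real (t - b)" using z by (simp add: eq_diff_eq)
  have "K t = v * cnj (ip d (psi t))" unfolding K_def ip_cnj[of "psi t" d] ..
  also have "\<dots> = cnj (v * ip d (psi t))" unfolding complex_cnj_mult v_real ..
  also have "\<dots> = complex_of_real (t - b)" unfolding h by simp
  finally show ?thesis .
qed

lemma psi_ae: "t \<in> R \<Longrightarrow> AE p in nu. T (psi t) p = complex_of_real t * psi t p - v * d p"
proof -
  assume t: "t \<in> R"
  show ?thesis using psi_eq[OF t]
  proof eventually_elim
    case (elim p)
    then have "T (psi t) p = - v * d p + complex_of_real t * psi t p" by (simp only: diff_eq_eq)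
    then show ?case by simp
  qed
qed

lemma ip_T_psi: "s \<in> R \<Longrightarrow> t \<in> R \<Longrightarrow> ip (psi s) (T (psi t)) = complex_of_real t * ip (psi s) (psi t) - v * ip (psi s) d"
proof -
  assume s: "s \<in> R" and t: "t \<in> R"
  note Ls = psi_L2[OF s] and Lt = psi_L2[OF t]
  have L3: "(\<lambda>p. complex_of_real t * psi t p - v * d p) \<in> L2" by (intro L2_diff L2_cmult Lt d_L2)
  have "ip (psi s) (T (psi t)) = ip (psi s) (\<lambda>p. complex_of_real t * psi t p - v * d p)"
    by (rule ip_cong_AE[OF L2_meas[OF Ls] L2_meas[OF T_L2[OF Lt]] L2_meas[OF L3] psi_ae[OF t]])
  also have "\<dots> = ip (psi s) (\<lambda>p. complex_of_real t * psi t p) - ip (psi s) (\<lambda>p. v * d p)"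
    by (rule ip_diff_right[OF Ls L2_cmult[OF Lt] L2_cmult[OF d_L2]])
  also have "\<dots> = complex_of_real t * ip (psi s) (psi t) - v * ip (psi s) d"
    by (simp only: ip_cmult_right)
  finally show ?thesis .
qed

lemma ident: "s \<in> R \<Longrightarrow> t \<in> R \<Longrightarrow> complex_of_real (t - s) * ip (psi s) (psi t) = K s - cnj (K t)"
proof -
  assume s: "s \<in> R" and t: "t \<in> R"
  note Ls = psi_L2[OF s] and Lt = psi_L2[OF t]
  have c1': "ip (psi s) (T (psi t)) = complex_of_real t * ip (psi s) (psi t) - K s"
    unfolding ip_T_psi[OF s t] K_def ..
  have c2: "ip (psi t) (T (psi s)) = complex_of_real s * ip (psi t) (psi s) - K t"
    unfolding ip_T_psi[OF t s] K_def ..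
  have "ip (psi s) (T (psi t)) = ip (T (psi s)) (psi t)" by (rule T_sym[OF Ls Lt])
  also have "\<dots> = cnj (ip (psi t) (T (psi s)))" by (rule ip_cnj)
  also have "\<dots> = complex_of_real s * ip (psi s) (psi t) - cnj (K t)"
    unfolding c2 complex_cnj_diff complex_cnj_mult complex_cnj_complex_of_real ip_cnj' ..
  finally have "complex_of_real t * ip (psi s) (psi t) - K s = complex_of_real s * ip (psi s) (psi t) - cnj (K t)"
    unfolding c1' .
  then show ?thesis by (simp add: algebra_simps)
qed

lemma K_real: "t \<in> R \<Longrightarrow> cnj (K t) = K t"
  using ident[of t t] by simp

definition F :: "real \<Rightarrow> real" where "F t = t - Re (K t)"

lemma F_diff: "s \<in> R \<Longrightarrow> t \<in> R \<Longrightarrow> F t - F s = (t - s) * (1 + Re (ip (psi s) (psi t)))"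
proof -
  assume s: "s \<in> R" and t: "t \<in> R"
  have "complex_of_real (t - s) * ip (psi s) (psi t) = K s - K t" using ident[OF s t] unfolding K_real[OF t] .
  then have "Re (complex_of_real (t - s) * ip (psi s) (psi t)) = Re (K s - K t)" by (rule arg_cong)
  then have "(t - s) * Re (ip (psi s) (psi t)) = Re (K s) - Re (K t)" by simp
  then show ?thesis unfolding F_def by (simp add: algebra_simps)
qed

end


context absop begin

lemma delta_bound:
  assumes s: "s \<in> R" and t: "t \<in> R" and small: "(Cst s * (t - s))\<^sup>2 \<le> 1/4"
  shows "(L2norm (\<lambda>p. psi t p - psi s p))\<^sup>2 \<le> 4 * (Cst s * (t - s))\<^sup>2 * (L2norm (psi s))\<^sup>2"
proof -
  note Ls = psi_L2[OF s] and Lt = psi_L2[OF t]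
  define \<delta> where "\<delta> p = psi t p - psi s p" for p
  have dL2: "\<delta> \<in> L2" unfolding \<delta>_def[abs_def] by (rule L2_diff[OF Lt Ls])
  have Tlin: "T \<delta> p = T (psi t) p - T (psi s) p" for p
    using T_lin[OF Lt Ls, of 1 p] unfolding \<delta>_def[abs_def] by simp
  have ae: "AE p in nu. T \<delta> p - complex_of_real s * \<delta> p = complex_of_real (t - s) * psi t p"
    using psi_ae[OF s] psi_ae[OF t]
  proof eventually_elim
    case (elim p)
    show ?case unfolding Tlin elim(1) elim(2) \<delta>_def by (simp add: algebra_simps)
  qed
  have m1: "(\<lambda>p. T \<delta> p - complex_of_real s * \<delta> p) \<in> borel_measurable borel" by (rule L2_meas[OF res_L2[OF dL2]])
  have m2: "(\<lambda>p. complex_of_real (t - s) * psi t p) \<in> borel_measurable borel" by (rule L2_meas[OF L2_cmult[OF Lt]])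
  have "L2norm \<delta> \<le> Cst s * L2norm (\<lambda>p. T \<delta> p - complex_of_real s * \<delta> p)" by (rule Cst_prop[OF s dL2])
  also have "\<dots> = Cst s * (\<bar>t - s\<bar> * L2norm (psi t))"
    unfolding L2norm_cong_AE[OF m1 m2 ae] L2norm_cmult norm_of_real ..
  also have "\<dots> \<le> \<bar>Cst s\<bar> * (\<bar>t - s\<bar> * L2norm (psi t))"
    by (rule mult_right_mono) (auto simp: L2norm_nonneg)
  finally have n1: "L2norm \<delta> \<le> \<bar>Cst s * (t - s)\<bar> * L2norm (psi t)" by (simp add: abs_mult mult.assoc)
  have n2: "(L2norm \<delta>)\<^sup>2 \<le> (Cst s * (t - s))\<^sup>2 * (L2norm (psi t))\<^sup>2"
  proof -
    have "(L2norm \<delta>)\<^sup>2 \<le> (\<bar>Cst s * (t - s)\<bar> * L2norm (psi t))\<^sup>2"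
      by (rule power_mono[OF n1 L2norm_nonneg])
    then show ?thesis by (simp add: power_mult_distrib)
  qed
  have pt: "psi t = (\<lambda>p. psi s p + \<delta> p)" unfolding \<delta>_def by auto
  have n3: "(L2norm (psi t))\<^sup>2 \<le> 2 * (L2norm (psi s))\<^sup>2 + 2 * (L2norm \<delta>)\<^sup>2"
    unfolding pt by (rule L2norm_add_sq[OF Ls dL2])
  define a where "a = (Cst s * (t - s))\<^sup>2"
  define X where "X = (L2norm \<delta>)\<^sup>2"
  define Y where "Y = (L2norm (psi s))\<^sup>2"
  have a0: "0 \<le> a" "a \<le> 1/4" using small unfolding a_def by auto
  have X0: "0 \<le> X" unfolding X_def by simp
  have "X \<le> a * (2 * Y + 2 * X)"
    using n2 mult_left_mono[OF n3 a0(1)] unfolding a_def X_def Y_def by linarith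
  then have h: "X * (1 - 2 * a) \<le> 2 * a * Y" by (simp add: algebra_simps)
  have "X * (1/2) \<le> X * (1 - 2 * a)" by (rule mult_left_mono) (use a0 X0 in auto)
  then have "X \<le> 4 * a * Y" using h by linarith
  then show ?thesis unfolding X_def a_def Y_def \<delta>_def by simp
qed

lemma ip_close:
  assumes s: "s \<in> R" and t: "t \<in> R" and ts: "t \<noteq> s" and small: "(Cst s * (t - s))\<^sup>2 \<le> 1/4"
  shows "\<bar>Re (ip (psi s) (psi t)) - (L2norm (psi s))\<^sup>2\<bar> \<le> \<bar>t - s\<bar> * ((1 + 4 * (Cst s)\<^sup>2) * (L2norm (psi s))\<^sup>2 / 2)"
proof -
  note Ls = psi_L2[OF s] and Lt = psi_L2[OF t]
  define \<delta> where "\<delta> p = psi t p - psi s p" for p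
  have dL2: "\<delta> \<in> L2" unfolding \<delta>_def[abs_def] by (rule L2_diff[OF Lt Ls])
  have "ip (psi s) \<delta> = ip (psi s) (psi t) - ip (psi s) (psi s)"
    unfolding \<delta>_def[abs_def] by (rule ip_diff_right[OF Ls Lt Ls])
  then have e: "Re (ip (psi s) (psi t)) - (L2norm (psi s))\<^sup>2 = Re (ip (psi s) \<delta>)"
    unfolding ip_self by simp
  define \<tau> where "\<tau> = \<bar>t - s\<bar>"
  have tau: "\<tau> > 0" unfolding \<tau>_def using ts by simp
  have db: "(L2norm \<delta>)\<^sup>2 \<le> 4 * (Cst s)\<^sup>2 * \<tau>\<^sup>2 * (L2norm (psi s))\<^sup>2"
    using delta_bound[OF s t small] unfolding \<delta>_def[abs_def] \<tau>_def by (simp add: power_mult_distrib)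
  have "\<bar>Re (ip (psi s) \<delta>)\<bar> \<le> cmod (ip (psi s) \<delta>)" by (rule abs_Re_le_cmod)
  also have "\<dots> \<le> (\<tau> * (L2norm (psi s))\<^sup>2 + (L2norm \<delta>)\<^sup>2 / \<tau>) / 2" by (rule ip_bound[OF Ls dL2 tau])
  also have "\<dots> \<le> (\<tau> * (L2norm (psi s))\<^sup>2 + 4 * (Cst s)\<^sup>2 * \<tau> * (L2norm (psi s))\<^sup>2) / 2"
  proof -
    have "(L2norm \<delta>)\<^sup>2 / \<tau> \<le> (4 * (Cst s)\<^sup>2 * \<tau>\<^sup>2 * (L2norm (psi s))\<^sup>2) / \<tau>"
      by (rule divide_right_mono[OF db]) (use tau in simp)
    also have "\<dots> = 4 * (Cst s)\<^sup>2 * \<tau> * (L2norm (psi s))\<^sup>2" using tau by (simp add: power2_eq_square)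
    finally show ?thesis by (rule divide_right_mono[OF add_left_mono]) simp
  qed
  also have "\<dots> = \<tau> * ((1 + 4 * (Cst s)\<^sup>2) * (L2norm (psi s))\<^sup>2 / 2)" by (simp add: algebra_simps)
  finally show ?thesis unfolding e \<tau>_def .
qed

lemma F_quot: "s \<in> R \<Longrightarrow> t \<in> R \<Longrightarrow> t \<noteq> s \<Longrightarrow> (F t - F s) / (t - s) = 1 + Re (ip (psi s) (psi t))"
  using F_diff[of s t] by simp

lemma F_deriv:
  assumes x: "x \<in> R" and sub: "S \<subseteq> R"
  shows "(F has_field_derivative (1 + (L2norm (psi x))\<^sup>2)) (at x within S)"
  unfolding has_field_derivative_iff
proof (rule Lim_withinI)
  fix e :: real assume e: "e > 0"
  define C where "C = Cst x"
  define M where "M = (1 + 4 * C\<^sup>2) * (L2norm (psi x))\<^sup>2 / 2"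
  have M0: "M \<ge> 0" unfolding M_def by simp
  define \<delta> where "\<delta> = min (1 / (2 * \<bar>C\<bar> + 1)) (e / (M + 1))"
  have dpos: "\<delta> > 0" unfolding \<delta>_def using e M0 by (simp add: add_pos_nonneg)
  show "\<exists>\<delta>>0. \<forall>y\<in>S. 0 < dist y x \<and> dist y x < \<delta> \<longrightarrow>
          dist ((F y - F x) / (y - x)) (1 + (L2norm (psi x))\<^sup>2) \<le> e"
  proof (intro exI[of _ \<delta>] conjI ballI impI dpos)
    fix y assume y: "y \<in> S" and yd: "0 < dist y x \<and> dist y x < \<delta>"
    have yR: "y \<in> R" using y sub by blast
    have yx: "y \<noteq> x" using yd by simp
    have d1: "\<bar>y - x\<bar> < 1 / (2 * \<bar>C\<bar> + 1)" and d2: "\<bar>y - x\<bar> < e / (M + 1)"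
      using yd unfolding \<delta>_def dist_real_def by auto
    have "\<bar>C\<bar> * \<bar>y - x\<bar> \<le> 1/2"
    proof -
      have pos: "0 < 2 * \<bar>C\<bar> + 1" by simp
      have "\<bar>y - x\<bar> * (2 * \<bar>C\<bar> + 1) < 1" using d1 pos by (simp add: less_divide_eq)
      moreover have "\<bar>y - x\<bar> * (2 * \<bar>C\<bar> + 1) = 2 * (\<bar>C\<bar> * \<bar>y - x\<bar>) + \<bar>y - x\<bar>"
        by (simp add: algebra_simps)
      moreover have "0 \<le> \<bar>y - x\<bar>" by simp
      ultimately show ?thesis by linarith
    qed
    then have small: "(Cst x * (y - x))\<^sup>2 \<le> 1/4"
    proof -
      assume h: "\<bar>C\<bar> * \<bar>y - x\<bar> \<le> 1/2"
      have "(Cst x * (y - x))\<^sup>2 = (\<bar>C\<bar> * \<bar>y - x\<bar>)\<^sup>2" unfolding C_def by (simp add: power_mult_distrib)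
      also have "\<dots> \<le> (1/2)\<^sup>2" by (rule power_mono[OF h]) simp
      finally show ?thesis by (simp add: power2_eq_square)
    qed
    have "dist ((F y - F x) / (y - x)) (1 + (L2norm (psi x))\<^sup>2) = \<bar>Re (ip (psi x) (psi y)) - (L2norm (psi x))\<^sup>2\<bar>"
      unfolding F_quot[OF x yR yx] dist_real_def by simp
    also have "\<dots> \<le> \<bar>y - x\<bar> * M" unfolding M_def C_def by (rule ip_close[OF x yR yx small])
    also have "\<dots> \<le> e / (M + 1) * M" by (rule mult_right_mono[OF less_imp_le[OF d2] M0])
    also have "\<dots> \<le> e"
    proof -
      have "e / (M + 1) * M = e * (M / (M + 1))" by simp
      also have "\<dots> \<le> e * 1" by (rule mult_left_mono) (use M0 e in auto)
      finally show ?thesis by simp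
    qed
    finally show "dist ((F y - F x) / (y - x)) (1 + (L2norm (psi x))\<^sup>2) \<le> e" .
  qed
qed

definition W where "W = (\<lambda>w. ((\<lambda>p. T (fst w) p + v * snd w * d p), v * ip d (fst w) + complex_of_real b * snd w))"

lemma F_ev: "t \<in> R \<Longrightarrow> is_eigenvalue_H W (complex_of_real t) \<Longrightarrow> F t = b"
  using eigen_K[of t] unfolding W_def F_def by simp

lemma no_two: 
  assumes C: "C \<in> components R" and l1: "l1 \<in> C" and l2: "l2 \<in> C" and lt: "l1 < l2"
    and e1: "is_eigenvalue_H W (complex_of_real l1)" and e2: "is_eigenvalue_H W (complex_of_real l2)"
  shows False
proof -
  have CR: "C \<subseteq> R" by (rule in_components_subset[OF C])
  have "is_interval C" using in_components_connected[OF C] is_interval_connected_1 by blast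
  then have iv: "\<forall>a\<in>C. \<forall>b\<in>C. \<forall>x. a \<le> x \<and> x \<le> b \<longrightarrow> x \<in> C" unfolding is_interval_1 .
  have sub: "{l1..l2} \<subseteq> C"
  proof
    fix x assume "x \<in> {l1..l2}"
    then have "l1 \<le> x" "x \<le> l2" by auto
    then show "x \<in> C" using iv l1 l2 by blast
  qed
  then have subR: "{l1..l2} \<subseteq> R" using CR by blast
  have "F l1 < F l2"
  proof (rule DERIV_pos_imp_increasing_open[OF lt])
    fix x assume x: "l1 < x" "x < l2"
    have xR: "x \<in> R" using x subR by auto
    have "(F has_field_derivative (1 + (L2norm (psi x))\<^sup>2)) (at x within {l1..l2})"
      by (rule F_deriv[OF xR subR])
    then have "(F has_field_derivative (1 + (L2norm (psi x))\<^sup>2)) (at x)"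
      using at_within_Icc_at[OF x] by simp
    moreover have "1 + (L2norm (psi x))\<^sup>2 > 0" by (simp add: add_pos_nonneg)
    ultimately show "\<exists>y. (F has_field_derivative y) (at x) \<and> y > 0" by blast
  next
    show "continuous_on {l1..l2} F"
      unfolding continuous_on_eq_continuous_within
    proof
      fix x assume "x \<in> {l1..l2}"
      then have xR: "x \<in> R" using subR by auto
      show "continuous (at x within {l1..l2}) F"
        by (rule DERIV_continuous[OF F_deriv[OF xR subR]])
    qed
  qed
  moreover have "F l1 = b" using F_ev[OF _ e1] l1 CR by blast
  moreover have "F l2 = b" using F_ev[OF _ e2] l2 CR by blast
  ultimately show False by simp
qed

lemma unique_ev:
  assumes C: "C \<in> components R" and l1: "l1 \<in> C" and l2: "l2 \<in> C"
    and e1: "is_eigenvalue_H W (complex_of_real l1)" and e2: "is_eigenvalue_H W (complex_of_real l2)"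
  shows "l1 = l2"
proof (rule ccontr)
  assume "l1 \<noteq> l2"
  then consider "l1 < l2" | "l2 < l1" by linarith
  then show False
  proof cases
    case 1 then show False using no_two[OF C l1 l2 _ e1 e2] by blast
  next
    case 2 then show False using no_two[OF C l2 l1 _ e2 e1] by blast
  qed
qed

end


theorem corollary4p7:
  fixes eps hb U :: real and u ups p1 p2 :: "int \<times> int \<Rightarrow> real" and k :: "real \<times> real"
  assumes eps: "eps \<ge> 0" and hb: "0 \<le> hb" "hb \<le> 1/2" and U: "U \<ge> 0"
    and u_nonneg: "\<forall>x. u x \<ge> 0"
    and rot: "rot_inv u" "rot_inv ups" "rot_inv p1" "rot_inv p2"
    and u_sum: "u summable_on UNIV"
    and ups_sum: "(\<lambda>x. \<bar>ups x\<bar>) summable_on UNIV"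
    and p1_exp: "\<exists>\<alpha>>0. (\<lambda>z. exp (\<alpha> * norm (real_of_int (fst z), real_of_int (snd z))) * \<bar>p1 z\<bar>)
                    summable_on UNIV"
    and p2_exp: "\<exists>\<alpha>>0. (\<lambda>z. exp (\<alpha> * norm (real_of_int (fst z), real_of_int (snd z))) * \<bar>p2 z\<bar>)
                    summable_on UNIV"
    and p2_supp: "\<forall>z. \<not> (even (fst z) \<and> even (snd z)) \<longrightarrow> p2 z = 0"
    and p_nz: "\<exists>z. p1 z + p2 z \<noteq> 0"
    and p_gen: "\<forall>q. \<exists>x. complex_of_real (p2 x) \<noteq> - cis (dotZ q x / 2) * complex_of_real (p1 x)"
    and k: "k \<in> TT"
  shows "\<forall>C \<in> components {t::real. in_resolvent (A11 eps U u k) (complex_of_real t)}.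
           \<forall>l1\<in>C. \<forall>l2\<in>C.
             is_eigenvalue_H (Aop eps hb U u ups p1 p2 k) (complex_of_real l1) \<and>
             is_eigenvalue_H (Aop eps hb U u ups p1 p2 k) (complex_of_real l2) \<longrightarrow> l1 = l2"
proof -
  have u0: "\<And>x. u x \<ge> 0" using u_nonneg by blast
  have s1: "(\<lambda>x. \<bar>p1 x\<bar>) summable_on UNIV" by (rule exp_sum_abs[OF p1_exp])
  have s2: "(\<lambda>x. \<bar>p2 x\<bar>) summable_on UNIV" by (rule exp_sum_abs[OF p2_exp])
  interpret absop "A11 eps U u k" "dfun p1 p2 k" "fhat ups k" "bfun eps hb k"
  proof
    show "\<And>\<phi>. \<phi> \<in> L2 \<Longrightarrow> A11 eps U u k \<phi> \<in> L2" by (rule A11_L2[OF u0 u_sum])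
    show "\<And>\<phi> \<psi> c p. \<phi> \<in> L2 \<Longrightarrow> \<psi> \<in> L2 \<Longrightarrow>
      A11 eps U u k (\<lambda>p. \<phi> p - c * \<psi> p) p = A11 eps U u k \<phi> p - c * A11 eps U u k \<psi> p"
      by (rule A11_lin[OF u0 u_sum])
    show "\<And>\<phi> \<psi>. \<phi> \<in> L2 \<Longrightarrow> \<psi> \<in> L2 \<Longrightarrow> ip \<phi> (A11 eps U u k \<psi>) = ip (A11 eps U u k \<phi>) \<psi>"
      by (rule A11_sym[OF u0 u_sum])
    show "dfun p1 p2 k \<in> L2" by (rule dfun_L2[OF s1 s2])
    show "cnj (fhat ups k) = fhat ups k" by (rule fhat_real[OF rot(2)])
  qed
  have WA: "Aop eps hb U u ups p1 p2 k = W" unfolding W_def by (simp add: Aop_def fun_eq_iff)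
  have RR: "{t. in_resolvent (A11 eps U u k) (complex_of_real t)} = R" unfolding R_def ..
  show ?thesis unfolding WA RR using unique_ev by blast
qed

end
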